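(* Let $\Omega\subset\mathbb{R}^N$ be a bounded domain and $j\in\{1,\dots,N\}$. There exist constants $\mu>0$ depending only on $\Omega$ and $C>0$ independent of $\varepsilon$ such that for every $0<\varepsilon<1$, every $x_0\in\Omega$ and every $t>0$: for any strategies $S_I,S_{II}$ of the parabolic game started at $(x_0,t)$, \[ \mathbb{P}^{x_0,t}_{S_I,S_{II}}[t_\tau\le0]\le Ce^{-\mu t}, \] and for any strategies $\tilde S_I,\tilde S_{II}$ of the elliptic game started at $x_0$, \[ \mathbb{P}^{x_0}_{\tilde S_I,\tilde S_{II}}\Big[\tfrac{\varepsilon^2\tau}{2}\ge t\Big]\le Ce^{-\mu t}, \] where $\tau$ denotes the number of steps until the respective game ends.
   Context: Parabolic game (step size $\varepsilon$): a token at $(x_k,t_k)$, $x_k\in\Omega$, $t_k>0$; Player I chooses a $j$-dimensional linear subspace $S\subset\mathbb{R}^N$, Player II chooses a unit vector $v\in S$, and the token moves to $(x_k+\varepsilon v,t_k-\varepsilon^2/2)$ or $(x_k-\varepsilon v,t_k-\varepsilon^2/2)$ with probability $1/2$ each; the game ends at the first step $\tau$ at which $x_\tau\notin\Omega$ or $t_\tau\le0$. Elliptic game: the same dynamics on positions only ($x_{k+1}=x_k\pm\varepsilon v$ with probability $1/2$ each), ending at the first step $\tau$ with $x_\tau\notin\Omega$, with no time constraint. Strategies are measurable functions of the history of positions (and, for Player II, of the current subspace $S$); $\mathbb{P}$ denotes the induced probability on game sequences. *)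

theory Defs
  imports "HOL-Probability.Probability"
begin

text \<open>Probability space of the fair coin flips driving the game: coordinate k decides
  whether the token moves by +eps v (True) or -eps v (False) at step k.\<close>
definition coin_space :: "(nat \<Rightarrow> bool) measure" where
  "coin_space = PiM UNIV (\<lambda>_. measure_pmf (bernoulli_pmf (1/2)))"

definition strategy_I :: "nat \<Rightarrow> ('h list \<Rightarrow> 'a::euclidean_space set) \<Rightarrow> bool" where
  "strategy_I j SI \<longleftrightarrow> (\<forall>h. subspace (SI h) \<and> dim (SI h) = j)"

definition strategy_II :: "nat \<Rightarrow> ('h list \<Rightarrow> 'a::euclidean_space set \<Rightarrow> 'a) \<Rightarrow> bool" where
  "strategy_II j SII \<longleftrightarrow>
     (\<forall>h S. subspace S \<and> dim S = j \<longrightarrow> SII h S \<in> S \<and> norm (SII h S) = 1)"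

fun ell_hist :: "real \<Rightarrow> 'a::euclidean_space \<Rightarrow> ('a list \<Rightarrow> 'a set) \<Rightarrow>
    ('a list \<Rightarrow> 'a set \<Rightarrow> 'a) \<Rightarrow> (nat \<Rightarrow> bool) \<Rightarrow> nat \<Rightarrow> 'a list" where
  "ell_hist \<epsilon> x0 SI SII \<omega> 0 = [x0]"
| "ell_hist \<epsilon> x0 SI SII \<omega> (Suc k) =
     (let h = ell_hist \<epsilon> x0 SI SII \<omega> k
      in h @ [last h + (if \<omega> k then \<epsilon> else - \<epsilon>) *\<^sub>R SII h (SI h)])"

definition ell_pos :: "real \<Rightarrow> 'a::euclidean_space \<Rightarrow> ('a list \<Rightarrow> 'a set) \<Rightarrow>
    ('a list \<Rightarrow> 'a set \<Rightarrow> 'a) \<Rightarrow> (nat \<Rightarrow> bool) \<Rightarrow> nat \<Rightarrow> 'a" where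
  "ell_pos \<epsilon> x0 SI SII \<omega> k = last (ell_hist \<epsilon> x0 SI SII \<omega> k)"

definition ell_tau :: "'a set \<Rightarrow> real \<Rightarrow> 'a::euclidean_space \<Rightarrow> ('a list \<Rightarrow> 'a set) \<Rightarrow>
    ('a list \<Rightarrow> 'a set \<Rightarrow> 'a) \<Rightarrow> (nat \<Rightarrow> bool) \<Rightarrow> enat" where
  "ell_tau \<Omega> \<epsilon> x0 SI SII \<omega> =
     (if \<exists>k. ell_pos \<epsilon> x0 SI SII \<omega> k \<notin> \<Omega>
      then enat (LEAST k. ell_pos \<epsilon> x0 SI SII \<omega> k \<notin> \<Omega>) else \<infinity>)"

fun par_hist :: "real \<Rightarrow> 'a::euclidean_space \<Rightarrow> real \<Rightarrow> (('a \<times> real) list \<Rightarrow> 'a set) \<Rightarrow>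
    (('a \<times> real) list \<Rightarrow> 'a set \<Rightarrow> 'a) \<Rightarrow> (nat \<Rightarrow> bool) \<Rightarrow> nat \<Rightarrow> ('a \<times> real) list" where
  "par_hist \<epsilon> x0 t SI SII \<omega> 0 = [(x0, t)]"
| "par_hist \<epsilon> x0 t SI SII \<omega> (Suc k) =
     (let h = par_hist \<epsilon> x0 t SI SII \<omega> k
      in h @ [(fst (last h) + (if \<omega> k then \<epsilon> else - \<epsilon>) *\<^sub>R SII h (SI h),
               snd (last h) - \<epsilon>\<^sup>2 / 2)])"

definition par_pos :: "real \<Rightarrow> 'a::euclidean_space \<Rightarrow> real \<Rightarrow> (('a \<times> real) list \<Rightarrow> 'a set) \<Rightarrow>
    (('a \<times> real) list \<Rightarrow> 'a set \<Rightarrow> 'a) \<Rightarrow> (nat \<Rightarrow> bool) \<Rightarrow> nat \<Rightarrow> 'a \<times> real" where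
  "par_pos \<epsilon> x0 t SI SII \<omega> k = last (par_hist \<epsilon> x0 t SI SII \<omega> k)"

text \<open>First step at which x_k leaves the domain or t_k \<le> 0 (finite since eps > 0).\<close>
definition par_tau :: "'a set \<Rightarrow> real \<Rightarrow> 'a::euclidean_space \<Rightarrow> real \<Rightarrow> (('a \<times> real) list \<Rightarrow> 'a set) \<Rightarrow>
    (('a \<times> real) list \<Rightarrow> 'a set \<Rightarrow> 'a) \<Rightarrow> (nat \<Rightarrow> bool) \<Rightarrow> nat" where
  "par_tau \<Omega> \<epsilon> x0 t SI SII \<omega> =
     (LEAST k. fst (par_pos \<epsilon> x0 t SI SII \<omega> k) \<notin> \<Omega> \<or> snd (par_pos \<epsilon> x0 t SI SII \<omega> k) \<le> 0)"

end

theory Submission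
  imports Defs
begin

fun H :: "('h list \<Rightarrow> bool \<Rightarrow> 'h) \<Rightarrow> 'h \<Rightarrow> bool list \<Rightarrow> 'h list" where
  "H st x0 [] = [x0]"
| "H st x0 (b # bs) = x0 # H (\<lambda>h. st (x0 # h)) (st [x0] b) bs"

lemma H_ne: "H st x0 bs \<noteq> []"
  by (cases bs) auto

lemma H_last_Cons: "last (H st x0 (b # bs)) = last (H (\<lambda>h. st (x0 # h)) (st [x0] b) bs)"
  by (simp add: H_ne)

lemma H_snoc: "H st x0 (bs @ [b]) = H st x0 bs @ [st (H st x0 bs) b]"
  by (induction bs arbitrary: st x0) auto

lemma ell_hist_H: "ell_hist \<epsilon> x0 SI SII \<omega> k =
  H (\<lambda>h b. last h + (if b then \<epsilon> else - \<epsilon>) *\<^sub>R SII h (SI h)) x0 (map \<omega> [0..<k])"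
  by (induction k) (auto simp: H_snoc Let_def)

lemma par_hist_H: "par_hist \<epsilon> x0 t SI SII \<omega> k =
  H (\<lambda>h b. (fst (last h) + (if b then \<epsilon> else - \<epsilon>) *\<^sub>R SII h (SI h), snd (last h) - \<epsilon>\<^sup>2 / 2)) (x0, t) (map \<omega> [0..<k])"
  by (induction k) (auto simp: H_snoc Let_def)

lemma par_time: "snd (par_pos \<epsilon> x0 t SI SII \<omega> k) = t - real k * \<epsilon>\<^sup>2 / 2"
  unfolding par_pos_def
  by (induction k) (auto simp: Let_def add_divide_distrib distrib_right)

lemma cosh_bound:
  fixes y :: real assumes "\<bar>y\<bar> \<le> 1"
  shows "(exp y + exp (- y)) / 2 \<le> exp (y\<^sup>2)"
proof -
  have aux: "exp z + exp (- z) \<le> 2 + 2 * z\<^sup>2" if "0 \<le> z" "z \<le> 1" for z :: real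
  proof -
    have 1: "exp z \<le> 1 + z + z\<^sup>2" using exp_bound that by blast
    have "exp (- z) * (1 + z) \<le> exp (- z) * exp z"
      by (intro mult_left_mono) auto
    hence "exp (- z) * (1 + z) \<le> 1" by (simp add: exp_minus)
    moreover have "(1 - z + z\<^sup>2) * (1 + z) \<ge> 1" using that by (simp add: algebra_simps power2_eq_square power3_eq_cube)
    ultimately have "exp (- z) * (1 + z) \<le> (1 - z + z\<^sup>2) * (1 + z)" by linarith
    hence "exp (- z) \<le> 1 - z + z\<^sup>2"
      using that by (simp add: mult_le_cancel_right_pos)
    with 1 show ?thesis by simp
  qed
  have "exp y + exp (- y) \<le> 2 + 2 * y\<^sup>2"
    using aux[of y] aux[of "-y"] assms by (cases "y \<ge> 0") (auto simp: add.commute)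
  also have "\<dots> \<le> 2 * exp (y\<^sup>2)" using exp_ge_add_one_self[of "y\<^sup>2"] by linarith
  finally show ?thesis by simp
qed

lemma one_step:
  fixes x u :: "'a::real_inner"
  assumes nx: "norm x \<le> R" and nu: "norm u = 1" and R: "1 \<le> R" and e: "0 < \<epsilon>" "\<epsilon> \<le> 1"
  shows "(exp (- (1/(8*R\<^sup>2)) * (norm (x + \<epsilon> *\<^sub>R u))\<^sup>2) + exp (- (1/(8*R\<^sup>2)) * (norm (x + (- \<epsilon>) *\<^sub>R u))\<^sup>2)) / 2
    \<le> exp (- (1/(8*R\<^sup>2)) * (norm x)\<^sup>2) * exp (- (\<epsilon>\<^sup>2 / (16 * R\<^sup>2)))"
proof -
  define \<theta> where "\<theta> = 1/(8*R\<^sup>2)"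
  define a where "a = x \<bullet> u"
  have sq: "(norm (x + s *\<^sub>R u))\<^sup>2 = (norm x)\<^sup>2 + 2 * s * a + s\<^sup>2" for s
  proof -
    have uu: "u \<bullet> u = 1" using nu by (metis inner_real_def norm_eq_sqrt_inner one_power2 power2_norm_eq_inner)
    have "(norm (x + s *\<^sub>R u))\<^sup>2 = (x + s *\<^sub>R u) \<bullet> (x + s *\<^sub>R u)" by (rule power2_norm_eq_inner)
    also have "\<dots> = x \<bullet> x + 2 * s * (x \<bullet> u) + s\<^sup>2 * (u \<bullet> u)"
      by (simp add: inner_add_left inner_add_right inner_commute algebra_simps power2_eq_square)
    finally show ?thesis using uu unfolding a_def by (simp add: power2_norm_eq_inner)
  qed
  have absa: "\<bar>a\<bar> \<le> R"
    using Cauchy_Schwarz_ineq2[of x u] nx nu unfolding a_def by simp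
  define y where "y = 2 * \<theta> * \<epsilon> * a"
  have Rp: "R > 0" using R by simp
  have th: "\<theta> > 0" unfolding \<theta>_def using Rp by simp
  have absy: "\<bar>y\<bar> \<le> 2 * \<theta> * \<epsilon> * R"
    unfolding y_def using th e absa by (simp add: abs_mult)
  have "2 * \<theta> * \<epsilon> * R = \<epsilon> / (4 * R)" unfolding \<theta>_def using Rp by (simp add: field_simps power2_eq_square)
  also have "\<dots> \<le> 1" using e R by (simp add: field_simps)
  finally have y1: "\<bar>y\<bar> \<le> 1" using absy by linarith
  have "y\<^sup>2 \<le> (2 * \<theta> * \<epsilon> * R)\<^sup>2"
    using absy by (metis abs_ge_zero power2_abs power_mono)
  also have "\<dots> = \<epsilon>\<^sup>2 / (16 * R\<^sup>2)" unfolding \<theta>_def using Rp by (simp add: field_simps power2_eq_square)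
  finally have y2: "y\<^sup>2 \<le> \<epsilon>\<^sup>2 / (16 * R\<^sup>2)" .
  have the2: "\<theta> * \<epsilon>\<^sup>2 = \<epsilon>\<^sup>2 / (8 * R\<^sup>2)" unfolding \<theta>_def by simp
  have e1: "exp (- \<theta> * (norm (x + s *\<^sub>R u))\<^sup>2) = exp (- \<theta> * (norm x)\<^sup>2) * exp (- \<theta> * \<epsilon>\<^sup>2) * exp (- (2 * \<theta> * s * a))"
    if "s\<^sup>2 = \<epsilon>\<^sup>2" for s
    unfolding sq using that by (simp add: exp_add[symmetric] algebra_simps)
  have "exp (- \<theta> * (norm (x + \<epsilon> *\<^sub>R u))\<^sup>2) + exp (- \<theta> * (norm (x + (- \<epsilon>) *\<^sub>R u))\<^sup>2)
      = exp (- \<theta> * (norm x)\<^sup>2) * exp (- \<theta> * \<epsilon>\<^sup>2) * (exp y + exp (- y))"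
    using e1[of \<epsilon>] e1[of "- \<epsilon>"] unfolding y_def by (simp add: algebra_simps)
  also have "\<dots> \<le> exp (- \<theta> * (norm x)\<^sup>2) * exp (- \<theta> * \<epsilon>\<^sup>2) * (2 * exp (y\<^sup>2))"
    using cosh_bound[OF y1] by (intro mult_left_mono) auto
  also have "\<dots> = 2 * (exp (- \<theta> * (norm x)\<^sup>2) * exp (- \<theta> * \<epsilon>\<^sup>2 + y\<^sup>2))"
    by (simp add: exp_add[symmetric])
  also have "\<dots> \<le> 2 * (exp (- \<theta> * (norm x)\<^sup>2) * exp (- (\<epsilon>\<^sup>2 / (16 * R\<^sup>2))))"
  proof -
    have "- \<theta> * \<epsilon>\<^sup>2 + y\<^sup>2 \<le> - (\<epsilon>\<^sup>2 / (16 * R\<^sup>2))"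
    proof -
      have "\<epsilon>\<^sup>2 / (8 * R\<^sup>2) = 2 * (\<epsilon>\<^sup>2 / (16 * R\<^sup>2))" by simp
      thus ?thesis using y2 the2 by linarith
    qed
    thus ?thesis by simp
  qed
  finally show ?thesis unfolding \<theta>_def by simp
qed

definition stcond :: "('h \<Rightarrow> 'a::real_normed_vector) \<Rightarrow> real \<Rightarrow> ('h list \<Rightarrow> bool \<Rightarrow> 'h) \<Rightarrow> ('h list \<Rightarrow> 'a) \<Rightarrow> bool" where
  "stcond p \<epsilon> st u \<longleftrightarrow> (\<forall>h b. h \<noteq> [] \<longrightarrow> p (st h b) = p (last h) + (if b then \<epsilon> else - \<epsilon>) *\<^sub>R u h \<and> norm (u h) = 1)"

lemma stcond_shift: "stcond p \<epsilon> st u \<Longrightarrow> stcond p \<epsilon> (\<lambda>h. st (x0 # h)) (\<lambda>h. u (x0 # h))"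
  unfolding stcond_def by auto

lemma sum_len_Suc:
  "(\<Sum>bs\<in>{bs. length bs = Suc n}. f bs) =
   (\<Sum>bs\<in>{bs::bool list. length bs = n}. f (True # bs)) + (\<Sum>bs\<in>{bs. length bs = n}. f (False # bs))"
proof -
  let ?L = "{bs::bool list. length bs = n}"
  have eq: "{bs. length bs = Suc n} = Cons True ` ?L \<union> Cons False ` ?L"
  proof (rule set_eqI, rule iffI)
    fix bs :: "bool list" assume "bs \<in> {bs. length bs = Suc n}"
    then obtain c cs where "bs = c # cs" "length cs = n" by (auto simp: length_Suc_conv)
    thus "bs \<in> Cons True ` ?L \<union> Cons False ` ?L" by (cases c) auto
  qed auto
  have fin: "finite ?L" using finite_lists_length_eq[of "UNIV :: bool set" n] by simp
  have "(\<Sum>bs\<in>{bs. length bs = Suc n}. f bs) = (\<Sum>bs\<in>Cons True ` ?L. f bs) + (\<Sum>bs\<in>Cons False ` ?L. f bs)"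
    unfolding eq by (rule sum.union_disjoint) (use fin in auto)
  also have "\<dots> = (\<Sum>bs\<in>?L. f (True # bs)) + (\<Sum>bs\<in>?L. f (False # bs))"
    by (simp add: sum.reindex)
  finally show ?thesis .
qed

lemma all_le_Suc: "(\<forall>k\<le>Suc n. P k) \<longleftrightarrow> P 0 \<and> (\<forall>k\<le>n. P (Suc k))"
  apply auto
  apply (case_tac k)
  by auto

lemma core:
  fixes p :: "'h \<Rightarrow> 'a::real_inner"
  assumes \<Omega>: "\<forall>x\<in>\<Omega>. norm x \<le> R" and R: "1 \<le> R" and e: "0 < \<epsilon>" "\<epsilon> \<le> 1"
  shows "\<forall>st u x0. stcond p \<epsilon> st u \<longrightarrow>
    (\<Sum>bs\<in>{bs. length bs = n}. if (\<forall>k\<le>n. p (last (H st x0 (take k bs))) \<in> \<Omega>)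
        then exp (- (1/(8*R\<^sup>2)) * (norm (p (last (H st x0 bs))))\<^sup>2) else 0)
    \<le> 2 ^ n * exp (- (\<epsilon>\<^sup>2 / (16 * R\<^sup>2)) * real n) * exp (- (1/(8*R\<^sup>2)) * (norm (p x0))\<^sup>2)"
proof (induction n)
  case 0
  have *: "{bs::bool list. length bs = 0} = {[]}" by auto
  show ?case unfolding * by simp
next
  case (Suc n)
  define \<theta> where "\<theta> = 1/(8*R\<^sup>2)"
  define c where "c = \<epsilon>\<^sup>2 / (16 * R\<^sup>2)"
  show ?case unfolding \<theta>_def[symmetric] c_def[symmetric]
  proof (intro allI impI)
    fix st u x0 assume sc: "stcond p \<epsilon> st u"
    define st' where "st' = (\<lambda>h. st (x0 # h))"
    define u' where "u' = (\<lambda>h. u (x0 # h))"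
    have sc': "stcond p \<epsilon> st' u'" unfolding st'_def u'_def by (rule stcond_shift[OF sc])
    define F where "F = (\<lambda>bs. if (\<forall>k\<le>Suc n. p (last (H st x0 (take k bs))) \<in> \<Omega>)
        then exp (- \<theta> * (norm (p (last (H st x0 bs))))\<^sup>2) else 0)"
    define G where "G = (\<lambda>y bs. if (\<forall>k\<le>n. p (last (H st' y (take k bs))) \<in> \<Omega>)
        then exp (- \<theta> * (norm (p (last (H st' y bs))))\<^sup>2) else 0)"
    have FG: "F (b # bs) = (if p x0 \<in> \<Omega> then G (st [x0] b) bs else 0)" for b bs
    proof -
      have "(\<forall>k\<le>Suc n. p (last (H st x0 (take k (b # bs)))) \<in> \<Omega>) \<longleftrightarrow>
            p x0 \<in> \<Omega> \<and> (\<forall>k\<le>n. p (last (H st' (st [x0] b) (take k bs))) \<in> \<Omega>)"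
        unfolding all_le_Suc by (simp add: H_last_Cons st'_def H_ne)
      thus ?thesis unfolding F_def G_def by (auto simp: H_last_Cons st'_def H_ne)
    qed
    have IH: "(\<Sum>bs\<in>{bs. length bs = n}. G y bs) \<le> 2 ^ n * exp (- c * real n) * exp (- \<theta> * (norm (p y))\<^sup>2)" for y
      using Suc.IH sc' unfolding G_def \<theta>_def c_def by blast
    have Gnn: "0 \<le> G y bs" for y bs unfolding G_def by simp
    have "(\<Sum>bs\<in>{bs. length bs = Suc n}. F bs) = (\<Sum>bs\<in>{bs. length bs = n}. F (True # bs)) + (\<Sum>bs\<in>{bs. length bs = n}. F (False # bs))"
      by (rule sum_len_Suc)
    also have "\<dots> \<le> 2 ^ Suc n * exp (- c * real (Suc n)) * exp (- \<theta> * (norm (p x0))\<^sup>2)"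
    proof (cases "p x0 \<in> \<Omega>")
      case False
      thus ?thesis unfolding FG by simp
    next
      case True
      have "(\<Sum>bs\<in>{bs. length bs = n}. F (True # bs)) + (\<Sum>bs\<in>{bs. length bs = n}. F (False # bs))
         = (\<Sum>bs\<in>{bs. length bs = n}. G (st [x0] True) bs) + (\<Sum>bs\<in>{bs. length bs = n}. G (st [x0] False) bs)"
        unfolding FG using True by simp
      also have "\<dots> \<le> 2 ^ n * exp (- c * real n) * exp (- \<theta> * (norm (p (st [x0] True)))\<^sup>2)
                    + 2 ^ n * exp (- c * real n) * exp (- \<theta> * (norm (p (st [x0] False)))\<^sup>2)"
        by (intro add_mono IH)
      also have "\<dots> = 2 ^ n * exp (- c * real n) * (exp (- \<theta> * (norm (p x0 + \<epsilon> *\<^sub>R u [x0]))\<^sup>2) + exp (- \<theta> * (norm (p x0 + (- \<epsilon>) *\<^sub>R u [x0]))\<^sup>2))"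
        using sc unfolding stcond_def by (simp add: algebra_simps)
      also have "\<dots> \<le> 2 ^ n * exp (- c * real n) * (2 * (exp (- \<theta> * (norm (p x0))\<^sup>2) * exp (- c)))"
      proof -
        have "norm (u [x0]) = 1" using sc unfolding stcond_def by auto
        moreover have nb: "norm (p x0) \<le> R" using \<Omega> True by auto
        ultimately have h: "(exp (- \<theta> * (norm (p x0 + \<epsilon> *\<^sub>R u [x0]))\<^sup>2) + exp (- \<theta> * (norm (p x0 + (- \<epsilon>) *\<^sub>R u [x0]))\<^sup>2)) / 2
           \<le> exp (- \<theta> * (norm (p x0))\<^sup>2) * exp (- c)"
          unfolding \<theta>_def c_def using one_step[OF nb _ R e] by blast
        show ?thesis
          by (rule mult_left_mono) (use h in \<open>auto\<close>)
      qed
      also have "\<dots> = 2 ^ Suc n * exp (- c * real (Suc n)) * exp (- \<theta> * (norm (p x0))\<^sup>2)"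
        by (simp add: exp_add[symmetric] algebra_simps)
      finally show ?thesis .
    qed
    finally show "(\<Sum>bs\<in>{bs. length bs = Suc n}. if (\<forall>k\<le>Suc n. p (last (H st x0 (take k bs))) \<in> \<Omega>)
        then exp (- \<theta> * (norm (p (last (H st x0 bs))))\<^sup>2) else 0)
      \<le> 2 ^ Suc n * exp (- c * real (Suc n)) * exp (- \<theta> * (norm (p x0))\<^sup>2)"
      unfolding F_def .
  qed
qed

lemma count_bound:
  fixes p :: "'h \<Rightarrow> 'a::real_inner"
  assumes \<Omega>: "\<forall>x\<in>\<Omega>. norm x \<le> R" and R: "1 \<le> R" and e: "0 < \<epsilon>" "\<epsilon> \<le> 1"
    and sc: "stcond p \<epsilon> st u"
  shows "real (card {bs. length bs = n \<and> (\<forall>k\<le>n. p (last (H st x0 (take k bs))) \<in> \<Omega>)})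
     \<le> 2 ^ n * exp (- (\<epsilon>\<^sup>2 / (16 * R\<^sup>2)) * real n) * exp (1/8)"
proof -
  define \<theta> where "\<theta> = 1/(8*R\<^sup>2)"
  define c where "c = \<epsilon>\<^sup>2 / (16 * R\<^sup>2)"
  define L where "L = {bs::bool list. length bs = n}"
  define P where "P = (\<lambda>bs. \<forall>k\<le>n. p (last (H st x0 (take k bs))) \<in> \<Omega>)"
  have finL: "finite L" unfolding L_def using finite_lists_length_eq[of "UNIV :: bool set" n] by simp
  have B: "{bs. length bs = n \<and> P bs} = {bs\<in>L. P bs}" unfolding L_def by auto
  have Rp: "R > 0" using R by simp
  have "real (card {bs\<in>L. P bs}) * exp (- \<theta> * R\<^sup>2) = (\<Sum>bs\<in>L. if P bs then exp (- \<theta> * R\<^sup>2) else 0)"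
    using finL by (simp add: sum.If_cases Int_def)
  also have "\<dots> \<le> (\<Sum>bs\<in>L. if P bs then exp (- \<theta> * (norm (p (last (H st x0 bs))))\<^sup>2) else 0)"
  proof (rule sum_mono)
    fix bs assume "bs \<in> L"
    hence len: "length bs = n" unfolding L_def by simp
    show "(if P bs then exp (- \<theta> * R\<^sup>2) else 0) \<le> (if P bs then exp (- \<theta> * (norm (p (last (H st x0 bs))))\<^sup>2) else 0)"
    proof (cases "P bs")
      case True
      hence "p (last (H st x0 (take n bs))) \<in> \<Omega>" unfolding P_def by simp
      hence "norm (p (last (H st x0 bs))) \<le> R" using \<Omega> len by auto
      hence "(norm (p (last (H st x0 bs))))\<^sup>2 \<le> R\<^sup>2" by (simp add: power_mono)
      moreover have "\<theta> > 0" unfolding \<theta>_def using Rp by simp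
      ultimately show ?thesis using True by (simp add: mult_left_mono)
    qed simp
  qed
  also have "\<dots> \<le> 2 ^ n * exp (- c * real n) * exp (- \<theta> * (norm (p x0))\<^sup>2)"
    unfolding L_def P_def \<theta>_def c_def by (rule core[OF \<Omega> R e, where n=n and p=p, rule_format, OF sc])
  also have "\<dots> \<le> 2 ^ n * exp (- c * real n) * 1"
  proof -
    have "\<theta> > 0" unfolding \<theta>_def using Rp by simp
    hence "exp (- \<theta> * (norm (p x0))\<^sup>2) \<le> 1" by simp
    thus ?thesis by (intro mult_left_mono) auto
  qed
  finally have "real (card {bs\<in>L. P bs}) * exp (- \<theta> * R\<^sup>2) \<le> 2 ^ n * exp (- c * real n)" by simp
  moreover have "\<theta> * R\<^sup>2 = 1/8" unfolding \<theta>_def using Rp by simp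
  ultimately have "real (card {bs\<in>L. P bs}) * exp (- (1/8)) \<le> 2 ^ n * exp (- c * real n)" by simp
  hence "real (card {bs\<in>L. P bs}) * exp (- (1/8)) * exp (1/8) \<le> 2 ^ n * exp (- c * real n) * exp (1/8)"
    by (intro mult_right_mono) auto
  hence "real (card {bs\<in>L. P bs}) \<le> 2 ^ n * exp (- c * real n) * exp (1/8)"
    by (simp add: exp_add[symmetric] mult.assoc)
  thus ?thesis unfolding B[unfolded P_def] c_def by (simp add: P_def)
qed

lemma prob_coin: "prob_space coin_space"
  unfolding coin_space_def by (rule prob_space_PiM) (rule prob_space_measure_pmf)

lemma space_coin: "space coin_space = UNIV"
  unfolding coin_space_def by (simp add: space_PiM)

lemma cyl_measure:
  assumes "length bs = n"
  shows "{\<omega>. map \<omega> [0..<n] = bs} \<in> sets coin_space"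
    and "measure coin_space {\<omega>. map \<omega> [0..<n] = bs} = (1/2) ^ n"
proof -
  let ?M = "\<lambda>_::nat. measure_pmf (bernoulli_pmf (1/2))"
  have eq: "{\<omega>. map \<omega> [0..<n] = bs} = prod_emb UNIV ?M {..<n} (\<Pi>\<^sub>E i\<in>{..<n}. {bs ! i})"
    using assms by (auto simp: prod_emb_def PiE_iff list_eq_iff_nth_eq restrict_def)
  show "{\<omega>. map \<omega> [0..<n] = bs} \<in> sets coin_space"
    unfolding eq coin_space_def by (rule sets_PiM_I) auto
  have "emeasure coin_space {\<omega>. map \<omega> [0..<n] = bs} = (\<Prod>i\<in>{..<n}. emeasure (?M i) {bs ! i})"
    unfolding eq coin_space_def by (rule emeasure_PiM_emb) (auto intro: prob_space_measure_pmf)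
  also have "\<dots> = (\<Prod>i\<in>{..<n}. ennreal (1/2))"
    by (intro prod.cong refl) (simp add: emeasure_pmf_single pmf_bernoulli_True pmf_bernoulli_False split: if_splits)
  also have "\<dots> = ennreal (\<Prod>i\<in>{..<n}. 1/2)" by (rule prod_ennreal) simp
  also have "\<dots> = ennreal ((1/2) ^ n)" by simp
  finally show "measure coin_space {\<omega>. map \<omega> [0..<n] = bs} = (1/2) ^ n"
    by (simp add: measure_def)
qed

lemma event_bound:
  fixes p :: "'h \<Rightarrow> 'a::real_inner"
  assumes \<Omega>: "\<forall>x\<in>\<Omega>. norm x \<le> R" and R: "1 \<le> R" and e: "0 < \<epsilon>" "\<epsilon> \<le> 1"
    and sc: "stcond p \<epsilon> st u"
    and S: "S \<subseteq> {\<omega>. \<forall>k\<le>n. p (last (H st x0 (map \<omega> [0..<k]))) \<in> \<Omega>}"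
  shows "measure coin_space S \<le> exp (- (\<epsilon>\<^sup>2 / (16 * R\<^sup>2)) * real n) * exp (1/8)"
proof -
  interpret prob_space coin_space by (rule prob_coin)
  define P where "P = (\<lambda>bs. \<forall>k\<le>n. p (last (H st x0 (take k bs))) \<in> \<Omega>)"
  define B where "B = {bs. length bs = n \<and> P bs}"
  define E where "E = {\<omega>. \<forall>k\<le>n. p (last (H st x0 (map \<omega> [0..<k]))) \<in> \<Omega>}"
  have tk: "take k (map \<omega> [0..<n]) = map \<omega> [0..<k]" if "k \<le> n" for k \<omega>
    using that by (simp add: take_map)
  have EU: "E = (\<Union>bs\<in>B. {\<omega>. map \<omega> [0..<n] = bs})"
    unfolding E_def B_def P_def by (auto simp: tk)
  have finB: "finite B"
  proof -
    have "finite {bs::bool list. length bs = n}" using finite_lists_length_eq[of "UNIV :: bool set" n] by simp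
    thus ?thesis unfolding B_def by (rule rev_finite_subset) auto
  qed
  have "measure coin_space E = (\<Sum>bs\<in>B. measure coin_space {\<omega>. map \<omega> [0..<n] = bs})"
    unfolding EU
    by (rule measure_finite_Union[OF finB]) (auto simp: B_def cyl_measure disjoint_family_on_def)
  also have "\<dots> = real (card B) * (1/2) ^ n"
    by (simp add: B_def cyl_measure)
  also have "\<dots> \<le> 2 ^ n * exp (- (\<epsilon>\<^sup>2 / (16 * R\<^sup>2)) * real n) * exp (1/8) * (1/2) ^ n"
    using count_bound[OF \<Omega> R e sc, of n x0] unfolding B_def P_def
    by (intro mult_right_mono) auto
  also have "\<dots> = exp (- (\<epsilon>\<^sup>2 / (16 * R\<^sup>2)) * real n) * exp (1/8)"
    by (simp add: power_one_over)
  finally have mE: "measure coin_space E \<le> exp (- (\<epsilon>\<^sup>2 / (16 * R\<^sup>2)) * real n) * exp (1/8)" .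
  have "E \<in> sets coin_space" unfolding EU
    by (rule sets.finite_UN[OF finB]) (auto simp: B_def cyl_measure)
  hence "measure coin_space S \<le> measure coin_space E"
    using S unfolding E_def by (intro finite_measure_mono) auto
  with mE show ?thesis by linarith
qed

theorem lemma3p6:
  fixes \<Omega> :: "'a::euclidean_space set" and j :: nat
  assumes "open \<Omega>" "connected \<Omega>" "\<Omega> \<noteq> {}" "bounded \<Omega>"
    and "1 \<le> j" "j \<le> DIM('a)"
  shows "\<exists>\<mu>>0. \<exists>C>0. \<forall>\<epsilon>. 0 < \<epsilon> \<and> \<epsilon> < 1 \<longrightarrow> (\<forall>x0\<in>\<Omega>. \<forall>t>0.
     (\<forall>SI SII. strategy_I j SI \<and> strategy_II j SII \<longrightarrow>
        measure coin_space
          {\<omega> \<in> space coin_space.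
             snd (par_pos \<epsilon> x0 t SI SII \<omega> (par_tau \<Omega> \<epsilon> x0 t SI SII \<omega>)) \<le> 0}
        \<le> C * exp (- \<mu> * t)) \<and>
     (\<forall>SI SII. strategy_I j SI \<and> strategy_II j SII \<longrightarrow>
        measure coin_space
          {\<omega> \<in> space coin_space.
             \<forall>n. ell_tau \<Omega> \<epsilon> x0 SI SII \<omega> = enat n \<longrightarrow> t \<le> \<epsilon>\<^sup>2 * real n / 2}
        \<le> C * exp (- \<mu> * t)))"
proof -
  obtain b where b: "\<forall>x\<in>\<Omega>. norm x \<le> b" using assms(4) unfolding bounded_iff by blast
  define R where "R = max 1 b"
  have R1: "1 \<le> R" unfolding R_def by simp
  have \<Omega>R: "\<forall>x\<in>\<Omega>. norm x \<le> R" using b unfolding R_def by force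
  have Rp: "R > 0" using R1 by simp
  define \<mu> where "\<mu> = 1 / (8 * R\<^sup>2)"
  have \<mu>p: "\<mu> > 0" unfolding \<mu>_def using Rp by simp
  show ?thesis
  proof (rule exI[of _ \<mu>], intro conjI \<mu>p, rule exI[of _ "exp 1"], intro conjI exp_gt_zero allI impI ballI)
    fix \<epsilon> :: real and x0 t assume e: "0 < \<epsilon> \<and> \<epsilon> < 1" and x0: "x0 \<in> \<Omega>" and t: "(0::real) < t"
    have e0: "0 < \<epsilon>" and e1: "\<epsilon> \<le> 1" using e by auto
    define q where "q = 2 * t / \<epsilon>\<^sup>2"
    have qp: "q > 0" unfolding q_def using t e0 by simp
    define n where "n = nat (\<lceil>q\<rceil> - 1)"
    have rn: "real n = real_of_int \<lceil>q\<rceil> - 1" unfolding n_def using qp by simp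
    have nlt: "real n < q" using rn ceiling_less_iff[of q] by linarith
    have nge: "q - 1 \<le> real n" using rn le_of_int_ceiling[of q] by linarith
    have e2p: "\<epsilon>\<^sup>2 > 0" using e0 by simp
    have nt: "real n * \<epsilon>\<^sup>2 / 2 < t"
    proof -
      have "real n * \<epsilon>\<^sup>2 < q * \<epsilon>\<^sup>2" using nlt e2p by (simp add: mult_strict_right_mono)
      also have "q * \<epsilon>\<^sup>2 = 2 * t" unfolding q_def using e2p by simp
      finally show ?thesis by simp
    qed
    have fin: "exp (- (\<epsilon>\<^sup>2 / (16 * R\<^sup>2)) * real n) * exp (1/8) \<le> exp 1 * exp (- \<mu> * t)"
    proof -
      define c where "c = \<epsilon>\<^sup>2 / (16 * R\<^sup>2)"
      have cp: "c \<ge> 0" unfolding c_def by simp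
      have "c * (q - 1) \<le> c * real n" using nge cp by (simp add: mult_left_mono)
      moreover have "c * q = \<mu> * t" unfolding c_def q_def \<mu>_def using e0 Rp by (simp add: field_simps power2_eq_square)
      moreover have "c \<le> 1/16"
      proof -
        have "\<epsilon>\<^sup>2 \<le> 1" using e0 e1 by (simp add: power_le_one)
        moreover have "1 \<le> R\<^sup>2" using R1 by (simp add: one_le_power)
        ultimately show ?thesis unfolding c_def using Rp by (simp add: field_simps)
      qed
      ultimately have "- c * real n + 1/8 \<le> 1 + (- \<mu> * t)" by (simp add: algebra_simps)
      hence "exp (- c * real n + 1/8) \<le> exp (1 + (- \<mu> * t))" by simp
      moreover have "exp (- c * real n) * exp (1/8) = exp (- c * real n + 1/8)" by (rule exp_add[symmetric])
      moreover have "exp 1 * exp (- \<mu> * t) = exp (1 + (- \<mu> * t))" by (rule exp_add[symmetric])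
      ultimately show ?thesis unfolding c_def by simp
    qed
    show "measure coin_space {\<omega> \<in> space coin_space.
             snd (par_pos \<epsilon> x0 t SI SII \<omega> (par_tau \<Omega> \<epsilon> x0 t SI SII \<omega>)) \<le> 0}
        \<le> exp 1 * exp (- \<mu> * t)" if st: "strategy_I j SI \<and> strategy_II j SII" for SI SII
    proof -
      define stP where "stP = (\<lambda>h b. (fst (last h) + (if b then \<epsilon> else - \<epsilon>) *\<^sub>R SII h (SI h), snd (last h) - \<epsilon>\<^sup>2 / 2))"
      have sc: "stcond fst \<epsilon> stP (\<lambda>h. SII h (SI h))"
        using st unfolding stcond_def stP_def strategy_I_def strategy_II_def by auto
      have sub: "{\<omega> \<in> space coin_space. snd (par_pos \<epsilon> x0 t SI SII \<omega> (par_tau \<Omega> \<epsilon> x0 t SI SII \<omega>)) \<le> 0}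
        \<subseteq> {\<omega>. \<forall>k\<le>n. fst (last (H stP (x0, t) (map \<omega> [0..<k]))) \<in> \<Omega>}"
      proof (intro subsetI CollectI allI impI)
        fix \<omega> k assume \<omega>: "\<omega> \<in> {\<omega> \<in> space coin_space. snd (par_pos \<epsilon> x0 t SI SII \<omega> (par_tau \<Omega> \<epsilon> x0 t SI SII \<omega>)) \<le> 0}"
          and k: "k \<le> n"
        define \<tau> where "\<tau> = par_tau \<Omega> \<epsilon> x0 t SI SII \<omega>"
        have "snd (par_pos \<epsilon> x0 t SI SII \<omega> \<tau>) \<le> 0" using \<omega> unfolding \<tau>_def by simp
        hence "t - real \<tau> * \<epsilon>\<^sup>2 / 2 \<le> 0" by (simp only: par_time)
        with nt have "real n * \<epsilon>\<^sup>2 < real \<tau> * \<epsilon>\<^sup>2" by linarith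
        hence "n < \<tau>" using e2p by (simp add: mult_less_cancel_right_pos)
        hence "k < \<tau>" using k by simp
        hence "\<not> (fst (par_pos \<epsilon> x0 t SI SII \<omega> k) \<notin> \<Omega> \<or> snd (par_pos \<epsilon> x0 t SI SII \<omega> k) \<le> 0)"
          unfolding \<tau>_def par_tau_def by (rule not_less_Least)
        hence "fst (par_pos \<epsilon> x0 t SI SII \<omega> k) \<in> \<Omega>" by simp
        thus "fst (last (H stP (x0, t) (map \<omega> [0..<k]))) \<in> \<Omega>"
          unfolding par_pos_def par_hist_H stP_def .
      qed
      have "measure coin_space {\<omega> \<in> space coin_space. snd (par_pos \<epsilon> x0 t SI SII \<omega> (par_tau \<Omega> \<epsilon> x0 t SI SII \<omega>)) \<le> 0}
          \<le> exp (- (\<epsilon>\<^sup>2 / (16 * R\<^sup>2)) * real n) * exp (1/8)"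
        by (rule event_bound[OF \<Omega>R R1 e0 e1 sc sub])
      with fin show ?thesis by linarith
    qed
    show "measure coin_space {\<omega> \<in> space coin_space.
             \<forall>m. ell_tau \<Omega> \<epsilon> x0 SI SII \<omega> = enat m \<longrightarrow> t \<le> \<epsilon>\<^sup>2 * real m / 2}
        \<le> exp 1 * exp (- \<mu> * t)" if st: "strategy_I j SI \<and> strategy_II j SII" for SI SII
    proof -
      define stE where "stE = (\<lambda>h b. last h + (if b then \<epsilon> else - \<epsilon>) *\<^sub>R SII h (SI h))"
      have sc: "stcond (\<lambda>x. x) \<epsilon> stE (\<lambda>h. SII h (SI h))"
        using st unfolding stcond_def stE_def strategy_I_def strategy_II_def by auto
      have sub: "{\<omega> \<in> space coin_space. \<forall>m. ell_tau \<Omega> \<epsilon> x0 SI SII \<omega> = enat m \<longrightarrow> t \<le> \<epsilon>\<^sup>2 * real m / 2}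
        \<subseteq> {\<omega>. \<forall>k\<le>n. (\<lambda>x. x) (last (H stE x0 (map \<omega> [0..<k]))) \<in> \<Omega>}"
      proof (intro subsetI CollectI allI impI)
        fix \<omega> k assume \<omega>: "\<omega> \<in> {\<omega> \<in> space coin_space. \<forall>m. ell_tau \<Omega> \<epsilon> x0 SI SII \<omega> = enat m \<longrightarrow> t \<le> \<epsilon>\<^sup>2 * real m / 2}"
          and k: "k \<le> n"
        have "ell_pos \<epsilon> x0 SI SII \<omega> k \<in> \<Omega>"
        proof (rule ccontr)
          assume out: "ell_pos \<epsilon> x0 SI SII \<omega> k \<notin> \<Omega>"
          define m where "m = (LEAST k. ell_pos \<epsilon> x0 SI SII \<omega> k \<notin> \<Omega>)"
          have "ell_tau \<Omega> \<epsilon> x0 SI SII \<omega> = enat m" unfolding ell_tau_def m_def using out by auto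
          hence "t \<le> \<epsilon>\<^sup>2 * real m / 2" using \<omega> by auto
          moreover have "m \<le> k" unfolding m_def using out by (rule Least_le)
          hence "real m * \<epsilon>\<^sup>2 \<le> real n * \<epsilon>\<^sup>2" using k e2p by (simp add: mult_right_mono)
          ultimately show False using nt by (simp add: algebra_simps)
        qed
        thus "(\<lambda>x. x) (last (H stE x0 (map \<omega> [0..<k]))) \<in> \<Omega>"
          unfolding ell_pos_def ell_hist_H stE_def by simp
      qed
      have "measure coin_space {\<omega> \<in> space coin_space. \<forall>m. ell_tau \<Omega> \<epsilon> x0 SI SII \<omega> = enat m \<longrightarrow> t \<le> \<epsilon>\<^sup>2 * real m / 2}
          \<le> exp (- (\<epsilon>\<^sup>2 / (16 * R\<^sup>2)) * real n) * exp (1/8)"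
        by (rule event_bound[OF \<Omega>R R1 e0 e1 sc sub])
      with fin show ?thesis by linarith
    qed
  qed
qed

end
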